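(* Let $\alpha,\beta,\mu$ be real parameters with $0<\alpha\leq 1$, $\beta>0$, $0<\mu\leq 1$. Define $$T(x)=\frac{(1-\beta)x^2+(1-\alpha)x+\beta}{(\mu-\beta)x^2+x+\beta-\mu+1}.$$ Then $T$ is well defined on $[0,1]$ and maps $[0,1]$ into $[0,1]$. *)

theory Defs
  imports Complex_Main
begin

definition T_map :: "real \<Rightarrow> real \<Rightarrow> real \<Rightarrow> real \<Rightarrow> real" where
  "T_map \<alpha> \<beta> \<mu> x =
     ((1 - \<beta>) * x^2 + (1 - \<alpha>) * x + \<beta>) / ((\<mu> - \<beta>) * x^2 + x + \<beta> - \<mu> + 1)"

end

theory Submission
  imports Defs
begin

theorem proposition3:
  fixes \<alpha> \<beta> \<mu> :: real
  assumes "0 < \<alpha>" "\<alpha> \<le> 1" "0 < \<beta>" "0 < \<mu>" "\<mu> \<le> 1"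
  shows "(\<forall>x\<in>{0..1}. (\<mu> - \<beta>) * x^2 + x + \<beta> - \<mu> + 1 \<noteq> 0)
       \<and> (\<forall>x\<in>{0..1}. T_map \<alpha> \<beta> \<mu> x \<in> {0..1})"
proof -
  have pos: "(\<mu> - \<beta>) * x^2 + x + \<beta> - \<mu> + 1 > 0" if x: "x \<in> {0..1}" for x
  proof -
    have e: "(\<mu> - \<beta>) * x^2 + x + \<beta> - \<mu> + 1 = (1+x)*((1-x)*\<beta> + x + (1-x)*(1-\<mu>))"
      by (simp add: algebra_simps power2_eq_square)
    have "(1-x)*\<beta> \<ge> 0" "(1-x)*(1-\<mu>) \<ge> 0" using x assms by auto
    moreover have "(1-x)*\<beta> + x > 0"
    proof (cases "x = 0")
      case True then show ?thesis using assms by simp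
    next
      case False then show ?thesis using x \<open>(1-x)*\<beta> \<ge> 0\<close> by auto
    qed
    ultimately have "(1-x)*\<beta> + x + (1-x)*(1-\<mu>) > 0" by linarith
    then show ?thesis unfolding e using x by (simp add: zero_less_mult_iff)
  qed
  have "T_map \<alpha> \<beta> \<mu> x \<in> {0..1}" if x: "x \<in> {0..1}" for x
  proof -
    let ?D = "(\<mu> - \<beta>) * x^2 + x + \<beta> - \<mu> + 1"
    let ?N = "(1 - \<beta>) * x^2 + (1 - \<alpha>) * x + \<beta>"
    have D: "?D > 0" using pos x by blast
    have e1: "?N = \<beta>*(1-x^2) + x^2 + (1-\<alpha>)*x" by (simp add: algebra_simps)
    have e2: "?D - ?N = (1-\<mu>)*(1-x^2) + \<alpha>*x" by (simp add: algebra_simps)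
    have x2: "x^2 \<le> 1" using x by (simp add: power_le_one)
    have "?N \<ge> 0" unfolding e1 using x x2 assms by simp
    moreover have "?D - ?N \<ge> 0" unfolding e2 using x x2 assms by simp
    ultimately show ?thesis using D unfolding T_map_def by simp
  qed
  then show ?thesis using pos by (metis less_irrefl)
qed

end
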